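(* Let $\mu$ be a probability measure on $\mathbb{R}$ for which there exists $\lambda\in\mathbb{R}\setminus\{0\}$ with $\int_{\mathbb{R}}e^{\lambda x}\mu(dx)<\infty$. Then the characteristic function of $\mu$ does not vanish identically on any (nondegenerate) interval. *)

theory Defs
  imports "HOL-Probability.Probability"
begin

end

theory Submission
  imports Defs "HOL-Complex_Analysis.Complex_Analysis" "HOL-Real_Asymp.Real_Asymp"
begin

lemma integral_deriv_aux:
  fixes f f' :: "complex \<Rightarrow> 'a \<Rightarrow> complex" and w :: "'a \<Rightarrow> real"
  assumes r: "r > 0" and w: "integrable M w"
    and meas: "\<And>z. z \<in> ball z0 r \<Longrightarrow> f z \<in> borel_measurable M"
    and int: "\<And>z. z \<in> ball z0 r \<Longrightarrow> integrable M (f z)"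
    and meas': "f' z0 \<in> borel_measurable M"
    and der: "\<And>z x. z \<in> ball z0 r \<Longrightarrow> x \<in> space M \<Longrightarrow> ((\<lambda>z. f z x) has_field_derivative f' z x) (at z)"
    and bnd: "\<And>z x. z \<in> ball z0 r \<Longrightarrow> x \<in> space M \<Longrightarrow> norm (f' z x) \<le> w x"
  shows "((\<lambda>z. integral\<^sup>L M (f z)) has_field_derivative integral\<^sup>L M (f' z0)) (at z0)"
proof -
  define Q where "Q y = integral\<^sup>L M (\<lambda>x. (f y x - f z0 x) / (y - z0))" for y
  have qb: "norm ((f y x - f z0 x) / (y - z0)) \<le> w x" if "y \<in> ball z0 r" "y \<noteq> z0" "x \<in> space M" for y x
  proof -
    have "norm (f y x - f z0 x) \<le> w x * norm (y - z0)"
    proof (rule field_differentiable_bound[of "ball z0 r" "\<lambda>z. f z x" "\<lambda>z. f' z x"])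
      show "convex (ball z0 r)" by simp
      show "((\<lambda>z. f z x) has_field_derivative f' z x) (at z within ball z0 r)" if "z \<in> ball z0 r" for z
        using der[OF that \<open>x \<in> space M\<close>] by (rule has_field_derivative_at_within)
      show "norm (f' z x) \<le> w x" if "z \<in> ball z0 r" for z
        using bnd[OF that \<open>x \<in> space M\<close>] .
      show "y \<in> ball z0 r" by fact
      show "z0 \<in> ball z0 r" using r by simp
    qed
    then show ?thesis using that by (simp add: norm_divide divide_le_eq)
  qed
  have limQ: "(Q \<longlongrightarrow> integral\<^sup>L M (f' z0)) (at z0)"
    unfolding tendsto_at_iff_sequentially
  proof (intro allI impI)
    fix X :: "nat \<Rightarrow> complex" assume X: "\<forall>i. X i \<in> UNIV - {z0}" "X \<longlonglongrightarrow> z0"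
    obtain N where N0: "\<And>n. n \<ge> N \<Longrightarrow> dist (X n) z0 < r"
      using tendstoD[OF X(2) r] unfolding eventually_sequentially by blast
    have N: "\<And>n. n \<ge> N \<Longrightarrow> X n \<in> ball z0 r"
      using N0 by (simp add: dist_commute)
    show "(Q \<circ> X) \<longlonglongrightarrow> integral\<^sup>L M (f' z0)"
      unfolding comp_def Q_def
    proof (rule LIMSEQ_offset[where k=N], rule integral_dominated_convergence[where w=w])
      show "f' z0 \<in> borel_measurable M" by fact
      show "integrable M w" by fact
      show "(\<lambda>x. (f (X (n + N)) x - f z0 x) / (X (n + N) - z0)) \<in> borel_measurable M" for n
        using N[of "n+N"] meas[of "X (n+N)"] meas[of z0] r by auto
      show "AE x in M. norm ((f (X (n + N)) x - f z0 x) / (X (n + N) - z0)) \<le> w x" for n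
        using N[of "n+N"] X(1) by (intro AE_I2 qb) auto
      show "AE x in M. (\<lambda>n. (f (X (n + N)) x - f z0 x) / (X (n + N) - z0)) \<longlonglongrightarrow> f' z0 x"
      proof (rule AE_I2)
        fix x assume x: "x \<in> space M"
        have "((\<lambda>y. (f y x - f z0 x) / (y - z0)) \<longlongrightarrow> f' z0 x) (at z0)"
          using der[OF _ x, of z0] r by (simp add: has_field_derivative_iff)
        then have "((\<lambda>y. (f y x - f z0 x) / (y - z0)) \<circ> X) \<longlonglongrightarrow> f' z0 x"
          using X unfolding tendsto_at_iff_sequentially by blast
        then show "(\<lambda>n. (f (X (n + N)) x - f z0 x) / (X (n + N) - z0)) \<longlonglongrightarrow> f' z0 x"
          using LIMSEQ_ignore_initial_segment[of _ _ N] by (simp add: comp_def)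
      qed
    qed
  qed
  have evQ: "\<forall>\<^sub>F y in at z0. Q y = (integral\<^sup>L M (f y) - integral\<^sup>L M (f z0)) / (y - z0)"
  proof -
    have "\<forall>\<^sub>F y in at z0. y \<in> ball z0 r"
      using r by (intro eventually_at_in_open') auto
    then show ?thesis
    proof eventually_elim
      case (elim y)
      then show ?case unfolding Q_def using int[of y] int[of z0] r
        by (simp add: diff_divide_distrib[symmetric])
    qed
  qed
  have "((\<lambda>y. (integral\<^sup>L M (f y) - integral\<^sup>L M (f z0)) / (y - z0)) \<longlongrightarrow> integral\<^sup>L M (f' z0)) (at z0)"
    using tendsto_cong[OF evQ] limQ by blast
  then show ?thesis by (simp add: has_field_derivative_iff)
qed


lemma exp_le_aux:
  fixes s c :: real assumes "0 \<le> s" "s \<le> 1"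
  shows "exp (s * c) \<le> 1 + exp c"
proof (cases "c \<ge> 0")
  case True
  then have "s * c \<le> c" using assms by (simp add: mult_left_le_one_le)
  then show ?thesis by (smt (verit) exp_gt_zero exp_le_cancel_iff)
next
  case False
  then have "s * c \<le> 0" using assms by (simp add: mult_nonneg_nonpos)
  then show ?thesis by (smt (verit) exp_gt_zero exp_le_one_iff)
qed

lemma abs_exp_le_aux:
  fixes s c d :: real assumes d: "0 < d" "d \<le> s" "s \<le> 1 - d"
  shows "\<bar>c\<bar> * exp (s * c) \<le> (1 + exp c) / d"
proof (cases "c \<ge> 0")
  case True
  have "d * c \<le> exp (d * c)" using exp_ge_add_one_self[of "d*c"] by linarith
  moreover have "exp (s * c) \<le> exp ((1 - d) * c)" using True d by (simp add: mult_right_mono)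
  ultimately have "d * c * exp (s * c) \<le> exp (d * c) * exp ((1 - d) * c)"
    using True d by (intro mult_mono) auto
  also have "\<dots> = exp c" by (simp add: exp_add[symmetric] algebra_simps)
  finally have "d * (\<bar>c\<bar> * exp (s * c)) \<le> 1 + exp c" using True by (simp add: mult.assoc)
  then show ?thesis using d by (simp add: le_divide_eq mult.commute)
next
  case False
  have "d * (-c) \<le> exp (d * (-c))" using exp_ge_add_one_self[of "d*(-c)"] by linarith
  moreover have "exp (s * c) \<le> exp (d * c)" using False d by (simp add: mult_right_mono_neg)
  ultimately have "d * (-c) * exp (s * c) \<le> exp (d * (-c)) * exp (d * c)"
    using False d by (intro mult_mono) auto
  also have "\<dots> = 1" by (simp add: exp_add[symmetric] algebra_simps)
  finally have "d * (\<bar>c\<bar> * exp (s * c)) \<le> 1 + exp c" using False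
    by (smt (verit) exp_gt_zero mult.assoc)
  then show ?thesis using d by (simp add: le_divide_eq mult.commute)
qed

lemma norm_exp_aux: "norm (exp (- \<i> * z * complex_of_real c)) = exp (Im z * c)"
  by (simp add: norm_exp_eq_Re)


theorem lemma2p3:
  fixes M :: "real measure" and l :: real
  assumes "real_distribution M"
    and "l \<noteq> 0"
    and "(\<integral>\<^sup>+ x. ennreal (exp (l * x)) \<partial>M) < \<infinity>"
  shows "\<forall>a b. a < b \<longrightarrow> \<not> (\<forall>t\<in>{a..b}. char M t = 0)"
proof (intro allI impI notI)
  fix a b :: real
  assume ab: "a < b" and z: "\<forall>t\<in>{a..b}. char M t = 0"
  interpret real_distribution M by fact
  define e where "e z x = exp (- \<i> * z * complex_of_real (l * x))" for z x
  define G where "G z = integral\<^sup>L M (e z)" for z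
  define W where "W x = 1 + exp (l * x)" for x
  have meas_e: "e z \<in> borel_measurable M" for z
    unfolding e_def by measurable
  have intexp: "integrable M (\<lambda>x. exp (l * x))"
    using assms(3) by (subst integrable_iff_bounded) auto
  have intW: "integrable M W"
    unfolding W_def using intexp by auto
  have int_e: "integrable M (e z)" if "0 \<le> Im z" "Im z \<le> 1" for z
  proof (rule Bochner_Integration.integrable_bound[OF intW meas_e], rule AE_I2)
    fix x show "norm (e z x) \<le> norm (W x)"
      unfolding e_def W_def norm_exp_aux using exp_le_aux[OF that, of "l*x"]
      by (simp add: add_pos_pos)
  qed
  have cont: "continuous_on {z. 0 \<le> Im z \<and> Im z \<le> 1} G"
  proof (rule continuous_on_sequentiallyI)
    fix u :: "nat \<Rightarrow> complex" and z0
    assume u: "\<forall>n. u n \<in> {z. 0 \<le> Im z \<and> Im z \<le> 1}" "z0 \<in> {z. 0 \<le> Im z \<and> Im z \<le> 1}" "u \<longlonglongrightarrow> z0"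
    show "(\<lambda>n. G (u n)) \<longlonglongrightarrow> G z0"
      unfolding G_def
    proof (rule integral_dominated_convergence[where w=W])
      show "AE x in M. (\<lambda>i. e (u i) x) \<longlonglongrightarrow> e z0 x"
        unfolding e_def by (intro AE_I2 tendsto_intros u(3))
      show "AE x in M. norm (e (u i) x) \<le> W x" for i
        unfolding e_def W_def norm_exp_aux using exp_le_aux u(1)
        by (intro AE_I2) auto
    qed (auto simp: meas_e intW)
  qed
  have holo: "G holomorphic_on {z. 0 < Im z} \<inter> {z. Im z < 1}"
  proof (subst holomorphic_on_open, (intro open_Int open_Collect_less continuous_intros; simp), intro ballI)
    fix z0 assume z0: "z0 \<in> {z. 0 < Im z} \<inter> {z. Im z < 1}"
    define r where "r = min (Im z0) (1 - Im z0) / 2"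
    have r: "r > 0" using z0 by (auto simp: r_def)
    have imb: "r \<le> Im z \<and> Im z \<le> 1 - r" if "z \<in> ball z0 r" for z
    proof -
      have "\<bar>Im z - Im z0\<bar> < r"
        using that abs_Im_le_cmod[of "z - z0"] by (simp add: dist_norm norm_minus_commute)
      then have "Im z0 - r < Im z \<and> Im z < Im z0 + r" by (simp add: abs_diff_less_iff)
      then show ?thesis unfolding r_def min_def by (cases "Im z0 \<le> 1 - Im z0") (auto simp: field_simps)
    qed
    have "((\<lambda>z. integral\<^sup>L M (e z)) has_field_derivative
             integral\<^sup>L M (\<lambda>x. (- \<i> * complex_of_real (l * x)) * e z0 x)) (at z0)"
    proof (rule integral_deriv_aux[where r=r and w="\<lambda>x. W x / r"])
      show "integrable M (\<lambda>x. W x / r)" using intW by auto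
      show "e z \<in> borel_measurable M" for z by (rule meas_e)
      show "integrable M (e z)" if "z \<in> ball z0 r" for z
        using imb[OF that] r by (intro int_e) auto
      show "(\<lambda>x. (- \<i> * complex_of_real (l * x)) * e z0 x) \<in> borel_measurable M"
        unfolding e_def by measurable
      show "((\<lambda>z. e z x) has_field_derivative (- \<i> * complex_of_real (l * x)) * e z x) (at z)" for z x
        unfolding e_def by (auto intro!: derivative_eq_intros)
      show "norm ((- \<i> * complex_of_real (l * x)) * e z x) \<le> W x / r" if "z \<in> ball z0 r" for z x
        unfolding e_def W_def norm_mult norm_exp_aux
        using abs_exp_le_aux[of r "Im z" "l*x"] imb[OF that] r by (simp add: norm_mult abs_mult)
    qed (use r in auto)
    then show "\<exists>f'. (G has_field_derivative f') (at z0)" unfolding G_def[abs_def] by blast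
  qed
  have Greal: "G (complex_of_real t) = char M (- (t * l))" for t
    unfolding G_def char_def e_def
    by (rule Bochner_Integration.integral_cong) (auto simp: algebra_simps)
  obtain \<alpha> \<beta> where \<alpha>\<beta>: "\<alpha> < \<beta>" "\<And>t. \<alpha> < t \<Longrightarrow> t < \<beta> \<Longrightarrow> a \<le> - (t * l) \<and> - (t * l) \<le> b"
  proof (cases "l > 0")
    case True
    show ?thesis
    proof (rule that[of "- b / l" "- a / l"])
      show "- b / l < - a / l" using True ab by (simp add: divide_strict_right_mono)
      fix t assume "- b / l < t" "t < - a / l"
      then show "a \<le> - (t * l) \<and> - (t * l) \<le> b" using True
        by (auto simp: field_simps)
    qed
  next
    case False
    then have l: "l < 0" using assms(2) by auto
    show ?thesis
    proof (rule that[of "- a / l" "- b / l"])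
      show "- a / l < - b / l" using l ab by (simp add: divide_strict_right_mono_neg)
      fix t assume "- a / l < t" "t < - b / l"
      then show "a \<le> - (t * l) \<and> - (t * l) \<le> b" using l
        by (auto simp: field_simps)
    qed
  qed
  define S where "S = {z. \<alpha> < Re z} \<inter> {z. Re z < \<beta>} \<inter> {z. -1 < Im z} \<inter> {z. Im z < 1}"
  have openS: "open S" unfolding S_def
    by (intro open_Int open_Collect_less continuous_intros)
  have convS: "convex S" unfolding S_def
    by (intro convex_Int convex_halfspace_Re_gt convex_halfspace_Re_lt convex_halfspace_Im_gt convex_halfspace_Im_lt)
  define H where "H = (\<lambda>z. if 0 \<le> Im z then G z else cnj (G (cnj z)))"
  have Gzero: "G z = 0" if zS: "z \<in> S" and zR: "z \<in> \<real>" for z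
  proof -
    obtain t where t: "z = complex_of_real t" using zR by (auto elim: Reals_cases)
    have "\<alpha> < t" "t < \<beta>" using zS unfolding S_def t by auto
    then show ?thesis using z \<alpha>\<beta>(2)[of t] unfolding t Greal by auto
  qed
  have Hholo: "H holomorphic_on S"
    unfolding H_def
  proof (rule Schwarz_reflection[OF openS])
    show "cnj ` S \<subseteq> S" unfolding S_def by auto
    show "G holomorphic_on (S \<inter> {z. 0 < Im z})"
      by (rule holomorphic_on_subset[OF holo]) (auto simp: S_def)
    show "continuous_on (S \<inter> {z. 0 \<le> Im z}) G"
      by (rule continuous_on_subset[OF cont]) (auto simp: S_def)
    show "G z \<in> \<real>" if "z \<in> S" "z \<in> \<real>" for z using Gzero[OF that] by simp
  qed
  define \<xi> where "\<xi> = complex_of_real ((\<alpha> + \<beta>) / 2)"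
  have \<xi>S: "\<xi> \<in> S" unfolding S_def \<xi>_def using \<alpha>\<beta>(1) by auto
  have lim: "\<xi> islimpt (S \<inter> \<real>)"
  proof (rule islimpt_approachable[THEN iffD2], intro allI impI)
    fix d :: real assume d: "d > 0"
    define h where "h = min d ((\<beta> - \<alpha>) / 2) / 2"
    have h: "h > 0" "h < d" "h < (\<beta> - \<alpha>) / 2" using d \<alpha>\<beta>(1) unfolding h_def min_def by auto
    show "\<exists>x'\<in>S \<inter> \<real>. x' \<noteq> \<xi> \<and> dist x' \<xi> < d"
    proof (intro bexI conjI)
      show "complex_of_real ((\<alpha> + \<beta>) / 2 + h) \<noteq> \<xi>" unfolding \<xi>_def by (metis h(1) less_add_same_cancel1 of_real_eq_iff order_less_irrefl)
      show "dist (complex_of_real ((\<alpha> + \<beta>) / 2 + h)) \<xi> < d" using h unfolding \<xi>_def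
        by (simp add: dist_norm)
      show "complex_of_real ((\<alpha> + \<beta>) / 2 + h) \<in> S \<inter> \<real>" using h unfolding S_def by (auto simp: field_simps)
    qed
  qed
  have H0: "H z = 0" if "z \<in> S" for z
  proof (rule analytic_continuation[OF Hholo openS convex_connected[OF convS] _ \<xi>S lim])
    show "S \<inter> \<real> \<subseteq> S" by auto
    show "H z = 0" if "z \<in> S \<inter> \<real>" for z
      using that Gzero unfolding H_def by (auto elim: Reals_cases)
  qed fact
  define T where "T = {z. 0 < Im z} \<inter> {z. Im z < (1::real)}"
  have G0: "G z = 0" if "z \<in> T" for z
  proof (rule analytic_continuation_open[where f=G and s="S \<inter> {z. 0 < Im z}" and s'=T and g="\<lambda>_. 0"])
    show "open (S \<inter> {z. 0 < Im z})" using openS by (intro open_Int open_Collect_less continuous_intros)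
    show "open T" unfolding T_def by (intro open_Int open_Collect_less continuous_intros)
    show "S \<inter> {z. 0 < Im z} \<noteq> {}"
    proof -
      have "\<xi> + \<i> / 2 \<in> S \<inter> {z. 0 < Im z}" using \<alpha>\<beta>(1) unfolding S_def \<xi>_def by auto
      then show ?thesis by blast
    qed
    show "connected T" unfolding T_def
      by (intro convex_connected convex_Int convex_halfspace_Im_gt convex_halfspace_Im_lt)
    show "S \<inter> {z. 0 < Im z} \<subseteq> T" unfolding S_def T_def by auto
    show "G holomorphic_on T" using holo by (simp add: T_def)
    show "(\<lambda>_. 0) holomorphic_on T" by simp
    show "G z = 0" if "z \<in> S \<inter> {z. 0 < Im z}" for z
      using H0[of z] that unfolding H_def by auto
  qed fact
  define u where "u n = \<i> * complex_of_real (1 / (real n + 2))" for n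
  have "u \<longlonglongrightarrow> \<i> * complex_of_real 0"
  proof -
    have "(\<lambda>n::nat. 1 / (real n + 2)) \<longlonglongrightarrow> 0" by real_asymp
    then show ?thesis unfolding u_def by (intro tendsto_intros)
  qed
  then have u0: "u \<longlonglongrightarrow> 0" by simp
  have Imu: "Im (u n) = 1 / (real n + 2)" "Re (u n) = 0" for n by (simp_all add: u_def)
  have Imu2: "0 < Im (u n) \<and> Im (u n) < 1" for n
    unfolding Imu by (simp add: field_simps)
  have limG: "(\<lambda>n. G (u n)) \<longlonglongrightarrow> G 0"
  proof (rule continuous_on_tendsto_compose[OF cont u0])
    show "0 \<in> {z. 0 \<le> Im z \<and> Im z \<le> 1}" by simp
    show "\<forall>\<^sub>F n in sequentially. u n \<in> {z. 0 \<le> Im z \<and> Im z \<le> 1}"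
      using Imu2 by (intro always_eventually allI) (simp add: less_imp_le)
  qed
  have Gu: "G (u n) = 0" for n
    by (rule G0) (use Imu2[of n] in \<open>simp add: T_def\<close>)
  have "(\<lambda>n. 0) \<longlonglongrightarrow> G 0" using limG unfolding Gu .
  then have "G 0 = 0" using LIMSEQ_unique[OF _ tendsto_const] by blast
  moreover have "G 0 = 1" unfolding G_def e_def by (simp del: space_eq_univ add: prob_space)
  ultimately show False by simp
qed

end
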